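(* Let $n \ge 3$ and let $S$ be a $4$-cap free and $n$-cup free configuration with a fixed slope labeling $s$, and let $\alpha(p)=\alpha_1(p)$ and $\beta(p)=\alpha_2(p)$ be its $\alpha$-statistic. For any two distinct points $p, q$ with $\beta(p)=\beta(q)$: the edge joining $p$ and $q$ has label $1$, and $p<q$ if and only if $\alpha(p)<\alpha(q)$. For any two distinct points $p,q$ with $\alpha(p)=\alpha(q)$: the edge joining $p$ and $q$ has label $2$, and $p<q$ if and only if $\beta(p)<\beta(q)$.
   Context: A configuration is a finite set $S$ of points with a linear order $<$ and, for every $3$-element subset, an arbitrary assignment declaring it either a cap or a cup. Points $x_1<\cdots<x_a$ form an $a$-cup (resp. $a$-cap) if every consecutive triple $\{x_{i-1},x_i,x_{i+1}\}$, $1<i<a$, is assigned cup (resp. cap); $1$- and $2$-element sets are both caps and cups. The length of a cup is its number of points; a cup $x_1\cdots x_a$ with $a\ge 2$ ends with the point $x_a$ and the edge $x_{a-1}x_a$. An edge is a pair $x<y$, written $xy$. A slope labeling of a $4$-cap free configuration is an assignment $s(xy)\in\{1,2\}$ to every edge such that for any $x<y<z$, $s(xy)\le s(yz)$ implies $\{x,y,z\}$ is a $3$-cup. For $p\in S$, $\alpha(p)$ is the maximum length of a cup ending with $p$ and with an edge of label $1$ ($\alpha(p)=1$ if none), and $\beta(p)$ is the maximum length of a cup ending with $p$. *)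

theory Defs
  imports Main
begin

text \<open>A configuration: a finite set S of a linearly ordered type; the predicate
  iscup assigns to every 3-element subset T whether it is a cup (iscup T) or a
  cap (\<not> iscup T).\<close>

definition is_cup :: "('a::linorder set \<Rightarrow> bool) \<Rightarrow> 'a set \<Rightarrow> 'a list \<Rightarrow> bool" where
  "is_cup iscup S xs \<longleftrightarrow> sorted_wrt (<) xs \<and> set xs \<subseteq> S \<and>
     (\<forall>i. i + 2 < length xs \<longrightarrow> iscup {xs!i, xs!(i+1), xs!(i+2)})"

definition is_cap :: "('a::linorder set \<Rightarrow> bool) \<Rightarrow> 'a set \<Rightarrow> 'a list \<Rightarrow> bool" where
  "is_cap iscup S xs \<longleftrightarrow> sorted_wrt (<) xs \<and> set xs \<subseteq> S \<and>
     (\<forall>i. i + 2 < length xs \<longrightarrow> \<not> iscup {xs!i, xs!(i+1), xs!(i+2)})"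

definition cup_free :: "nat \<Rightarrow> ('a::linorder set \<Rightarrow> bool) \<Rightarrow> 'a set \<Rightarrow> bool" where
  "cup_free a iscup S \<longleftrightarrow> \<not> (\<exists>xs. is_cup iscup S xs \<and> length xs = a)"

definition cap_free :: "nat \<Rightarrow> ('a::linorder set \<Rightarrow> bool) \<Rightarrow> 'a set \<Rightarrow> bool" where
  "cap_free a iscup S \<longleftrightarrow> \<not> (\<exists>xs. is_cap iscup S xs \<and> length xs = a)"

definition slope_labeling ::
  "('a::linorder set \<Rightarrow> bool) \<Rightarrow> 'a set \<Rightarrow> ('a \<Rightarrow> 'a \<Rightarrow> nat) \<Rightarrow> bool" where
  "slope_labeling iscup S s \<longleftrightarrow>
     (\<forall>x\<in>S. \<forall>y\<in>S. x < y \<longrightarrow> s x y \<in> {1, 2}) \<and>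
     (\<forall>x\<in>S. \<forall>y\<in>S. \<forall>z\<in>S. x < y \<and> y < z \<and> s x y \<le> s y z \<longrightarrow> iscup {x, y, z})"

definition alpha_stat ::
  "('a::linorder set \<Rightarrow> bool) \<Rightarrow> 'a set \<Rightarrow> ('a \<Rightarrow> 'a \<Rightarrow> nat) \<Rightarrow> 'a \<Rightarrow> nat" where
  "alpha_stat iscup S s p = Max ({1} \<union> {length xs | xs. is_cup iscup S xs \<and> length xs \<ge> 2 \<and>
       last xs = p \<and> s (xs ! (length xs - 2)) p = 1})"

definition beta_stat ::
  "('a::linorder set \<Rightarrow> bool) \<Rightarrow> 'a set \<Rightarrow> 'a \<Rightarrow> nat" where
  "beta_stat iscup S p = Max {length xs | xs. is_cup iscup S xs \<and> xs \<noteq> [] \<and> last xs = p}"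

end

theory Submission
  imports Defs
begin

lemma cup_len_bound:
  assumes "is_cup iscup S xs" "finite S"
  shows "length xs \<le> card S"
proof -
  have "distinct xs" using assms(1) unfolding is_cup_def by (simp add: strict_sorted_iff)
  then have "length xs = card (set xs)" by (simp add: distinct_card)
  also have "\<dots> \<le> card S" using assms unfolding is_cup_def by (simp add: card_mono)
  finally show ?thesis .
qed

lemma cup_fin:
  assumes "finite S"
  shows "finite {length xs | xs. is_cup iscup S xs \<and> P xs}"
proof (rule finite_subset[of _ "{..card S}"])
  show "{length xs | xs. is_cup iscup S xs \<and> P xs} \<subseteq> {..card S}"
    using cup_len_bound[OF _ assms] by auto
qed simp

lemma cup_snoc:
  assumes c: "is_cup iscup S (ys@[p])" and q: "q \<in> S" "p < q"
    and t: "ys \<noteq> [] \<longrightarrow> iscup {last ys, p, q}"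
  shows "is_cup iscup S (ys@[p,q])"
proof -
  have so: "sorted_wrt (<) (ys@[p])" and sub: "set (ys@[p]) \<subseteq> S"
    and tr: "\<And>i. i + 2 < length (ys@[p]) \<Longrightarrow> iscup {(ys@[p])!i, (ys@[p])!(i+1), (ys@[p])!(i+2)}"
    using c unfolding is_cup_def by auto
  have lt: "\<forall>x\<in>set (ys@[p]). x < q" using so q by (auto simp: sorted_wrt_append)
  have "sorted_wrt (<) ((ys@[p])@[q])" using so lt by (simp only: sorted_wrt_append) simp
  then have so2: "sorted_wrt (<) (ys@[p,q])" by simp
  have sub2: "set (ys@[p,q]) \<subseteq> S" using sub q by auto
  have "iscup {(ys@[p,q])!i, (ys@[p,q])!(i+1), (ys@[p,q])!(i+2)}" if "i + 2 < length (ys@[p,q])" for i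
  proof (cases "i + 2 < length (ys@[p])")
    case True
    have e: "\<And>j. j < length (ys@[p]) \<Longrightarrow> (ys@[p,q])!j = (ys@[p])!j"
      by (metis append.assoc append_Cons append_Nil nth_append)
    show ?thesis using tr[OF True] e True by simp
  next
    case False
    then have yne: "ys \<noteq> []" and i1: "i + 1 = length ys" using that by auto
    obtain zs r where zr: "ys = zs @ [r]" using yne by (metis rev_exhaust)
    have iz: "i = length zs" using i1 zr by simp
    have "ys @ [p, q] = zs @ [r, p, q]" using zr by simp
    then show ?thesis using t zr iz by (simp add: nth_append)
  qed
  then show ?thesis using so2 sub2 unfolding is_cup_def by blast
qed

lemma sorted_last_lt:
  assumes "sorted_wrt (<) (ys@[p])" "ys \<noteq> []"
  shows "last ys < p"
  using assms by (auto simp: sorted_wrt_append)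

lemma label1:
  assumes fin: "finite S" and sl: "slope_labeling iscup S s"
    and pq: "p \<in> S" "q \<in> S" "p < q" "s p q = 1"
  shows "alpha_stat iscup S s p < alpha_stat iscup S s q"
proof -
  define A where "A = (\<lambda>p. {length xs | xs. is_cup iscup S xs \<and> length xs \<ge> 2 \<and>
       last xs = p \<and> s (xs ! (length xs - 2)) p = 1})"
  have al: "alpha_stat iscup S s x = Max ({1} \<union> A x)" for x
    unfolding alpha_stat_def A_def by simp
  have finA: "finite ({1} \<union> A x)" for x
    unfolding A_def using cup_fin[OF fin] by auto
  have ge: "k \<in> A q \<Longrightarrow> k \<le> alpha_stat iscup S s q" for k
    using al finA by (simp add: Max_ge)
  have "alpha_stat iscup S s p \<in> {1} \<union> A p" unfolding al by (rule Max_in[OF finA]) simp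
  then consider "alpha_stat iscup S s p = 1" | "alpha_stat iscup S s p \<in> A p" by blast
  then show ?thesis
  proof cases
    case 1
    have "is_cup iscup S [p,q]" using pq unfolding is_cup_def by auto
    then have "2 \<in> A q" unfolding A_def using pq
      by (smt (verit) One_nat_def diff_self_eq_0 last.simps le_refl length_Cons list.distinct(1)
          list.size(3) mem_Collect_eq nth_Cons_0 numeral_2_eq_2)
    then show ?thesis using ge 1 by fastforce
  next
    case 2
    then obtain xs where xs: "is_cup iscup S xs" "length xs \<ge> 2" "last xs = p"
      "s (xs ! (length xs - 2)) p = 1" "length xs = alpha_stat iscup S s p"
      unfolding A_def by auto
    define ys where "ys = butlast xs"
    have xe: "xs = ys @ [p]" using xs ys_def
      by (metis append_butlast_last_id list.size(3) not_numeral_le_zero)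
    have yne: "ys \<noteq> []" using xs xe by auto
    have ly: "xs ! (length xs - 2) = last ys" using xe yne
      by (simp add: last_conv_nth nth_append)
    have ys: "last ys \<in> S" using xs(1) xe yne unfolding is_cup_def by auto
    have lp: "last ys < p" using xs(1) xe yne sorted_last_lt unfolding is_cup_def by blast
    have "s (last ys) p = 1" using xs(4) ly by simp
    then have "iscup {last ys, p, q}" using sl ys pq lp unfolding slope_labeling_def by auto
    then have c: "is_cup iscup S (ys@[p,q])" using cup_snoc xs(1) xe pq by metis
    have "length (ys@[p,q]) \<in> A q" unfolding A_def using c pq
      by (auto intro!: exI[of _ "ys@[p,q]"] simp: nth_append)
    then have "length xs + 1 \<le> alpha_stat iscup S s q" using ge xe by simp
    then show ?thesis using xs by simp
  qed
qed

lemma label2: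
  assumes fin: "finite S" and sl: "slope_labeling iscup S s"
    and pq: "p \<in> S" "q \<in> S" "p < q" "s p q = 2"
  shows "beta_stat iscup S p < beta_stat iscup S q"
proof -
  define B where "B = (\<lambda>p. {length xs | xs. is_cup iscup S xs \<and> xs \<noteq> [] \<and> last xs = p})"
  have be: "beta_stat iscup S x = Max (B x)" for x
    unfolding beta_stat_def B_def by simp
  have finB: "finite (B x)" for x
    unfolding B_def using cup_fin[OF fin] by auto
  have ge: "k \<in> B q \<Longrightarrow> k \<le> beta_stat iscup S q" for k
    using be finB by (simp add: Max_ge)
  have "1 \<in> B p" unfolding B_def using pq
    by (auto intro!: exI[of _ "[p]"] simp: is_cup_def)
  then have "B p \<noteq> {}" by auto
  then have "beta_stat iscup S p \<in> B p" using be finB Max_in by simp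
  then obtain xs where xs: "is_cup iscup S xs" "xs \<noteq> []" "last xs = p"
      "length xs = beta_stat iscup S p"
      unfolding B_def by auto
  define ys where "ys = butlast xs"
  have xe: "xs = ys @ [p]" using xs ys_def
    by (metis append_butlast_last_id)
  have "iscup {last ys, p, q}" if yne: "ys \<noteq> []"
  proof -
    have ys: "last ys \<in> S" using xs(1) xe yne unfolding is_cup_def by auto
    have lp: "last ys < p" using xs(1) xe yne sorted_last_lt unfolding is_cup_def by blast
    have "s (last ys) p \<in> {1,2}" using sl ys pq lp unfolding slope_labeling_def by auto
    then have "s (last ys) p \<le> s p q" using pq by auto
    then show ?thesis using sl ys pq lp unfolding slope_labeling_def by auto
  qed
  then have c: "is_cup iscup S (ys@[p,q])" using cup_snoc xs(1) xe pq by metis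
  have "length (ys@[p,q]) \<in> B q" unfolding B_def using c
    by (auto intro!: exI[of _ "ys@[p,q]"])
  then have "length xs + 1 \<le> beta_stat iscup S q" using ge xe by simp
  then show ?thesis using xs by simp
qed

theorem corollary4p3:
  fixes S :: "'a::linorder set" and iscup :: "'a set \<Rightarrow> bool"
    and s :: "'a \<Rightarrow> 'a \<Rightarrow> nat" and n :: nat
  assumes "n \<ge> 3" and "finite S"
    and "cap_free 4 iscup S" and "cup_free n iscup S"
    and "slope_labeling iscup S s"
  shows "(\<forall>p\<in>S. \<forall>q\<in>S. p \<noteq> q \<and> beta_stat iscup S p = beta_stat iscup S q \<longrightarrow>
            s (min p q) (max p q) = 1 \<and>
            (p < q \<longleftrightarrow> alpha_stat iscup S s p < alpha_stat iscup S s q)) \<and>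
         (\<forall>p\<in>S. \<forall>q\<in>S. p \<noteq> q \<and> alpha_stat iscup S s p = alpha_stat iscup S s q \<longrightarrow>
            s (min p q) (max p q) = 2 \<and>
            (p < q \<longleftrightarrow> beta_stat iscup S p < beta_stat iscup S q))"
proof -
  have lab: "s p q = 1 \<or> s p q = 2" if "p \<in> S" "q \<in> S" "p < q" for p q
    using assms(5) that unfolding slope_labeling_def by auto
  have L1: "s p q = 1 \<Longrightarrow> alpha_stat iscup S s p < alpha_stat iscup S s q"
    and L2: "s p q = 2 \<Longrightarrow> beta_stat iscup S p < beta_stat iscup S q"
    if "p \<in> S" "q \<in> S" "p < q" for p q
    using label1[OF assms(2,5) that] label2[OF assms(2,5) that] by auto
  show ?thesis
  proof (rule conjI; intro ballI impI)
    fix p q assume pq: "p \<in> S" "q \<in> S" "p \<noteq> q \<and> beta_stat iscup S p = beta_stat iscup S q"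
    show "s (min p q) (max p q) = 1 \<and>
            (p < q \<longleftrightarrow> alpha_stat iscup S s p < alpha_stat iscup S s q)"
    proof (cases "p < q")
      case True
      then show ?thesis using lab[of p q] L1[of p q] L2[of p q] pq by auto
    next
      case False
      then have "q < p" using pq by auto
      then show ?thesis using lab[of q p] L1[of q p] L2[of q p] pq by auto
    qed
  next
    fix p q assume pq: "p \<in> S" "q \<in> S" "p \<noteq> q \<and> alpha_stat iscup S s p = alpha_stat iscup S s q"
    show "s (min p q) (max p q) = 2 \<and>
            (p < q \<longleftrightarrow> beta_stat iscup S p < beta_stat iscup S q)"
    proof (cases "p < q")
      case True
      then show ?thesis using lab[of p q] L1[of p q] L2[of p q] pq by auto
    next
      case False
      then have "q < p" using pq by auto
      then show ?thesis using lab[of q p] L1[of q p] L2[of q p] pq by auto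
    qed
  qed
qed

end
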